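(* Let $\hat v\in\{0,1\}^{\mathcal T}$ be the indicator vector of a proper triple set. Then the optimal objective value of the linear program $\mathrm{LP}(\hat v)$: minimize $\sum_{J\in\mathcal N}\beta_J y_J$ over $y\in[0,1]^{\mathcal N}$ subject to, for every triple $t=(J,J',J'')\in\mathcal T$, $y_{J''}-y_J\le 1-\hat v_t$, $y_{J''}-y_{J'}\le 1-\hat v_t$, $y_J+y_{J'}-y_{J''}\le 2-\hat v_t$, lies in the interval $[-\eta,0]$, where $\eta=-\sum_{i=1}^m\min(0,\alpha_i)$.
   Context: A multilinear program has data $n,m$, coefficients $\alpha_i\in\mathbb{R}$ and nonempty index sets $J_i\subseteq[n]$ ($i\in[m]$). Let $\mathcal N=\bigcup_i\{J:\emptyset\ne J\subseteq J_i\}$, and for $J\in\mathcal N$ let $\beta_J=\sum_{i: J_i=J}\alpha_i$ (so $\sum_J\beta_Jy_J=\sum_i\alpha_iy_{J_i}$). A triple is $t=(J,J',J'')$ with $J''\in\mathcal N$, $|J''|\ge2$, $J,J'$ nonempty, disjoint, $J\cup J'=J''$, listed with $J,J'$ in lexicographic order ($\mathsf{tail1}(t)=J$, $\mathsf{tail2}(t)=J'$, $\mathsf{head}(t)=J''$); $\mathcal T$ is the set of all triples. A proper triple set is a set $T\subseteq\mathcal T$ containing a subset $T'$ such that (1) every $J_i$ with $|J_i|>1$ is the head of some triple in $T'$, and (2) whenever a set $J$ with $|J|>1$ is the first or second element of a triple in $T'$, $J$ is the head of a different triple in $T'$. Its indicator vector has $\hat v_t=1$ iff $t\in T$. *)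

theory Defs
  imports Main "HOL.Real"
begin

text \<open>Instance data: index sets J i for i < m (i.e. [m] = {0..<m}), subsets of [n] = {1..n},
  coefficients alpha i.\<close>

definition valid_instance :: "nat \<Rightarrow> nat \<Rightarrow> (nat \<Rightarrow> nat set) \<Rightarrow> bool" where
  "valid_instance n m J \<longleftrightarrow> (\<forall>i<m. J i \<noteq> {} \<and> J i \<subseteq> {1..n})"

definition NN :: "nat \<Rightarrow> (nat \<Rightarrow> nat set) \<Rightarrow> nat set set" where
  "NN m J = (\<Union>i<m. {K. K \<noteq> {} \<and> K \<subseteq> J i})"

definition beta :: "nat \<Rightarrow> (nat \<Rightarrow> real) \<Rightarrow> (nat \<Rightarrow> nat set) \<Rightarrow> nat set \<Rightarrow> real" where
  "beta m alpha J K = (\<Sum>i\<in>{i. i < m \<and> J i = K}. alpha i)"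

type_synonym triple = "nat set \<times> nat set \<times> nat set"

definition tail1 :: "triple \<Rightarrow> nat set" where "tail1 t = fst t"
definition tail2 :: "triple \<Rightarrow> nat set" where "tail2 t = fst (snd t)"
definition head :: "triple \<Rightarrow> nat set" where "head t = snd (snd t)"

definition set_lex_less :: "nat set \<Rightarrow> nat set \<Rightarrow> bool" where
  "set_lex_less A B \<longleftrightarrow>
     (sorted_list_of_set A, sorted_list_of_set B) \<in> lexord {(x, y). x < y}"

definition Triples :: "nat \<Rightarrow> (nat \<Rightarrow> nat set) \<Rightarrow> triple set" where
  "Triples m J = {(A, B, C). C \<in> NN m J \<and> 2 \<le> card C \<and> A \<noteq> {} \<and> B \<noteq> {}
      \<and> A \<inter> B = {} \<and> A \<union> B = C \<and> set_lex_less A B}"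

definition proper_triple_set :: "nat \<Rightarrow> (nat \<Rightarrow> nat set) \<Rightarrow> triple set \<Rightarrow> bool" where
  "proper_triple_set m J T \<longleftrightarrow> T \<subseteq> Triples m J \<and>
     (\<exists>T' \<subseteq> T.
        (\<forall>i<m. 1 < card (J i) \<longrightarrow> (\<exists>t\<in>T'. head t = J i)) \<and>
        (\<forall>t\<in>T'. \<forall>K\<in>{tail1 t, tail2 t}. 1 < card K \<longrightarrow>
            (\<exists>t'\<in>T'. t' \<noteq> t \<and> head t' = K)))"

definition indicator_vec :: "triple set \<Rightarrow> triple \<Rightarrow> real" where
  "indicator_vec T t = (if t \<in> T then 1 else 0)"

definition LP_feasible :: "nat \<Rightarrow> (nat \<Rightarrow> nat set) \<Rightarrow> (triple \<Rightarrow> real) \<Rightarrow> (nat set \<Rightarrow> real) \<Rightarrow> bool" where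
  "LP_feasible m J v y \<longleftrightarrow>
     (\<forall>K\<in>NN m J. 0 \<le> y K \<and> y K \<le> 1) \<and>
     (\<forall>t\<in>Triples m J.
        y (head t) - y (tail1 t) \<le> 1 - v t \<and>
        y (head t) - y (tail2 t) \<le> 1 - v t \<and>
        y (tail1 t) + y (tail2 t) - y (head t) \<le> 2 - v t)"

definition LP_objective :: "nat \<Rightarrow> (nat \<Rightarrow> real) \<Rightarrow> (nat \<Rightarrow> nat set) \<Rightarrow> (nat set \<Rightarrow> real) \<Rightarrow> real" where
  "LP_objective m alpha J y = (\<Sum>K\<in>NN m J. beta m alpha J K * y K)"

definition LP_optimal_value :: "nat \<Rightarrow> (nat \<Rightarrow> real) \<Rightarrow> (nat \<Rightarrow> nat set) \<Rightarrow> (triple \<Rightarrow> real) \<Rightarrow> real \<Rightarrow> bool" where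
  "LP_optimal_value m alpha J v r \<longleftrightarrow>
     (\<exists>y. LP_feasible m J v y \<and> LP_objective m alpha J y = r) \<and>
     (\<forall>y. LP_feasible m J v y \<longrightarrow> r \<le> LP_objective m alpha J y)"

definition eta :: "nat \<Rightarrow> (nat \<Rightarrow> real) \<Rightarrow> real" where
  "eta m alpha = - (\<Sum>i<m. min 0 (alpha i))"

end

theory Submission
  imports Defs "HOL-Analysis.Analysis"
begin

lemma gen_attains_min:
  fixes X :: "'a topology" and G :: "('a \<Rightarrow> real) set" and f :: "'a \<Rightarrow> real"
  assumes cont: "\<And>g. g \<in> G \<Longrightarrow> continuous_map X euclideanreal g"
    and cB: "compactin X B"
    and sub: "{y\<in>topspace X. \<forall>g\<in>G. g y \<le> 0} \<subseteq> B"
    and cf: "continuous_map X euclideanreal f"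
    and ne: "z \<in> topspace X" "\<forall>g\<in>G. g z \<le> 0"
  shows "\<exists>y0\<in>{y\<in>topspace X. \<forall>g\<in>G. g y \<le> 0}. \<forall>y\<in>{y\<in>topspace X. \<forall>g\<in>G. g y \<le> 0}. f y0 \<le> f y"
proof -
  define C where "C = {y\<in>topspace X. \<forall>g\<in>G. g y \<le> 0}"
  have eq: "C = \<Inter> (insert (topspace X) ((\<lambda>g. {y\<in>topspace X. g y \<in> {..0}}) ` G))"
    unfolding C_def by auto
  have "closedin X C"
    unfolding eq
  proof (rule closedin_Inter)
    fix S assume "S \<in> insert (topspace X) ((\<lambda>g. {y\<in>topspace X. g y \<in> {..0}}) ` G)"
    then show "closedin X S"
    proof (cases "S = topspace X")
      case True then show ?thesis by simp
    next
      case False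
      then obtain g where "g \<in> G" "S = {y\<in>topspace X. g y \<in> {..0}}"
        using \<open>S \<in> _\<close> by blast
      then show ?thesis using closedin_continuous_map_preimage[OF cont[OF \<open>g \<in> G\<close>], of "{..0}"] by simp
    qed
  qed simp
  then have "compactin X C" using closed_compactin[OF cB] sub C_def by blast
  then have "compact (f ` C)" using image_compactin[OF _ cf] compactin_euclidean_iff by blast
  moreover have "f ` C \<noteq> {}" using ne C_def by auto
  ultimately obtain x where "x \<in> f ` C" "\<forall>y\<in>f ` C. x \<le> y"
    using compact_attains_inf by blast
  then obtain y0 where "y0 \<in> C" "\<forall>y\<in>C. f y0 \<le> f y" by blast
  then show ?thesis unfolding C_def by blast
qed



lemma finite_NN:
  assumes "valid_instance n m J" shows "finite (NN m J)"
proof -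
  have "NN m J \<subseteq> Pow {1..n}" using assms unfolding NN_def valid_instance_def by auto
  then show ?thesis by (meson finite_Pow_iff finite_atLeastAtMost finite_subset)
qed

lemma triple_in_NN:
  assumes "t \<in> Triples m J"
  shows "head t \<in> NN m J" "tail1 t \<in> NN m J" "tail2 t \<in> NN m J"
  using assms unfolding Triples_def NN_def head_def tail1_def tail2_def by auto

lemma feasible_restrict:
  assumes "LP_feasible m J v y"
  shows "LP_feasible m J v (restrict y (NN m J))"
  using assms triple_in_NN unfolding LP_feasible_def by auto

lemma objective_restrict:
  "LP_objective m alpha J (restrict y (NN m J)) = LP_objective m alpha J y"
  unfolding LP_objective_def by (rule sum.cong) auto

lemma objective_lower:
  assumes "valid_instance n m J" "LP_feasible m J v y"
  shows "- eta m alpha \<le> LP_objective m alpha J y"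
proof -
  have fin: "finite (NN m J)" using finite_NN[OF assms(1)] .
  have img: "J ` {..<m} \<subseteq> NN m J" using assms(1) unfolding valid_instance_def NN_def by auto
  have "- eta m alpha = (\<Sum>i<m. min 0 (alpha i))" unfolding eta_def by simp
  also have "\<dots> = (\<Sum>K\<in>NN m J. \<Sum>i\<in>{i\<in>{..<m}. J i = K}. min 0 (alpha i))"
    using sum.group[OF finite_lessThan fin img, of "\<lambda>i. min 0 (alpha i)"] by simp
  also have "\<dots> \<le> (\<Sum>K\<in>NN m J. beta m alpha J K * y K)"
  proof (rule sum_mono)
    fix K assume K: "K \<in> NN m J"
    have y01: "0 \<le> y K" "y K \<le> 1" using assms(2) K unfolding LP_feasible_def by auto
    have eqs: "{i\<in>{..<m}. J i = K} = {i. i < m \<and> J i = K}" by auto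
    have "(\<Sum>i\<in>{i\<in>{..<m}. J i = K}. min 0 (alpha i)) \<le> min 0 (beta m alpha J K)"
      unfolding beta_def eqs
      unfolding min.bounded_iff by (intro conjI sum_nonpos sum_mono) auto
    also have "\<dots> \<le> beta m alpha J K * y K"
    proof (cases "beta m alpha J K \<ge> 0")
      case True then show ?thesis using y01 by simp
    next
      case False
      then have "beta m alpha J K * 1 \<le> beta m alpha J K * y K"
        using y01 by (intro mult_left_mono_neg) auto
      then show ?thesis using False by simp
    qed
    finally show "(\<Sum>i\<in>{i\<in>{..<m}. J i = K}. min 0 (alpha i)) \<le> beta m alpha J K * y K" .
  qed
  finally show ?thesis unfolding LP_objective_def .
qed

lemma zero_feasible:
  "LP_feasible m J (indicator_vec T) (\<lambda>_. 0)"
  unfolding LP_feasible_def indicator_vec_def by auto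

theorem lemma1:
  fixes n m :: nat and alpha :: "nat \<Rightarrow> real" and J :: "nat \<Rightarrow> nat set" and T :: "triple set"
  assumes "valid_instance n m J"
    and "proper_triple_set m J T"
  shows "\<exists>r. LP_optimal_value m alpha J (indicator_vec T) r \<and> - eta m alpha \<le> r \<and> r \<le> 0"
proof -
  define N where "N = NN m J"
  define v where "v = indicator_vec T"
  define X where "X = product_topology (\<lambda>_::nat set. euclideanreal) N"
  define G :: "((nat set \<Rightarrow> real) \<Rightarrow> real) set" where "G =
    (\<Union>K\<in>N. {\<lambda>y. y K - 1, \<lambda>y. - y K}) \<union>
    (\<Union>t\<in>Triples m J. {\<lambda>y. y (head t) - y (tail1 t) - (1 - v t),
                          \<lambda>y. y (head t) - y (tail2 t) - (1 - v t),
                          \<lambda>y. y (tail1 t) + y (tail2 t) - y (head t) - (2 - v t)})"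
  have fin: "finite N" unfolding N_def using finite_NN[OF assms(1)] .
  have proj: "continuous_map X euclideanreal (\<lambda>y. y K)" if "K \<in> N" for K
    unfolding X_def using continuous_map_product_projection[OF that, of "\<lambda>_. euclideanreal"] by simp
  have cont: "continuous_map X euclideanreal g" if "g \<in> G" for g
    using that unfolding G_def
    by (auto intro!: continuous_intros proj simp: triple_in_NN N_def)
  have top: "topspace X = PiE N (\<lambda>_. UNIV)" unfolding X_def by simp
  have feas_iff: "(\<forall>g\<in>G. g y \<le> 0) \<longleftrightarrow> LP_feasible m J v y" for y
    unfolding G_def LP_feasible_def N_def by (simp add: ball_Un) (auto simp: ball_Un)
  have cB: "compactin X (PiE N (\<lambda>_. {0..1}))"
    unfolding X_def by (simp add: compactin_PiE)
  have sub: "{y\<in>topspace X. \<forall>g\<in>G. g y \<le> 0} \<subseteq> PiE N (\<lambda>_. {0..1})"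
    using top feas_iff unfolding LP_feasible_def N_def by (auto simp: PiE_iff extensional_def)
  have cf: "continuous_map X euclideanreal (LP_objective m alpha J)"
    unfolding LP_objective_def using fin
    by (auto intro!: continuous_intros proj simp: N_def)
  have z: "restrict (\<lambda>_. 0) N \<in> topspace X" "\<forall>g\<in>G. g (restrict (\<lambda>_. 0) N) \<le> 0"
    using top feas_iff feasible_restrict[OF zero_feasible] unfolding v_def N_def by auto
  obtain y0 where y0: "y0 \<in> topspace X" "\<forall>g\<in>G. g y0 \<le> 0"
    and min: "\<forall>y\<in>{y\<in>topspace X. \<forall>g\<in>G. g y \<le> 0}. LP_objective m alpha J y0 \<le> LP_objective m alpha J y"
    using gen_attains_min[OF cont cB sub cf z] by blast
  have f0: "LP_feasible m J v y0" using y0 feas_iff by blast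
  have lb: "LP_objective m alpha J y0 \<le> LP_objective m alpha J y" if "LP_feasible m J v y" for y
  proof -
    have "restrict y N \<in> topspace X" using top by auto
    moreover have "\<forall>g\<in>G. g (restrict y N) \<le> 0"
      using feas_iff feasible_restrict[OF that] unfolding N_def by blast
    ultimately have "LP_objective m alpha J y0 \<le> LP_objective m alpha J (restrict y N)"
      using min by blast
    then show ?thesis using objective_restrict unfolding N_def by metis
  qed
  have "LP_objective m alpha J y0 \<le> LP_objective m alpha J (\<lambda>_. 0)"
    using lb zero_feasible unfolding v_def by blast
  also have "\<dots> = 0" unfolding LP_objective_def by simp
  finally have up: "LP_objective m alpha J y0 \<le> 0" .
  show ?thesis
    using f0 lb up objective_lower[OF assms(1) f0] unfolding LP_optimal_value_def v_def
    by blast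
qed

end
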